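(* Let $V$ be a finite-dimensional real vector space and $P\subseteq V$ a polytope. Then in $\mathcal{P}(V)$ \[ *P = -\sum_{F\in\mathcal{F}(P)}(-1)^{\dim F}\cdot F. \]
   Context: A polytope in $V$ is the convex hull of a nonempty finite set; $\mathcal{P}(V)$ is the Grothendieck group of the monoid of polytopes in $V$ under Minkowski sum. $*P=\{-p: p\in P\}$. For $\phi\in\mathrm{Hom}(V,\mathbb{R})$, $F_\phi(P)=\{p\in P:\phi(p)=\max_{q\in P}\phi(q)\}$; a face of $P$ is a subset of the form $F_\phi(P)$ for some $\phi$ (including $\phi=0$, giving $P$ itself). $\mathcal{F}(P)$ is the set of faces of $P$, including $P$. *)

theory Defs
  imports "HOL-Analysis.Analysis"
begin

text \<open>Polytopes (nonempty, unlike the library notion): convex hulls of nonempty finite sets.\<close>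
definition ne_polytope :: "'a::euclidean_space set \<Rightarrow> bool" where
  "ne_polytope P \<longleftrightarrow> (\<exists>S. finite S \<and> S \<noteq> {} \<and> P = convex hull S)"

definition face_of_fun :: "('a::euclidean_space \<Rightarrow> real) \<Rightarrow> 'a set \<Rightarrow> 'a set" where
  "face_of_fun \<phi> P = {p \<in> P. \<forall>q\<in>P. \<phi> q \<le> \<phi> p}"

definition faces :: "'a::euclidean_space set \<Rightarrow> 'a set set" where
  "faces P = {F. \<exists>\<phi>. linear \<phi> \<and> F = face_of_fun \<phi> P}"

text \<open>Grothendieck group of the monoid of polytopes under Minkowski sum
  (Minkowski sum is the \<open>+\<close> on sets from Set_Algebras, neutral element \<open>0 = {0}\<close>).
  Elements are represented by formal differences (A,B) = [A] - [B] of polytopes;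
  addition is componentwise, negation swaps, and equality in the group is the
  Grothendieck relation \<open>groth_eq\<close>.\<close>
type_synonym 'a virt = "'a set \<times> 'a set"

definition groth_eq :: "'a::euclidean_space virt \<Rightarrow> 'a virt \<Rightarrow> bool" where
  "groth_eq x y \<longleftrightarrow> ne_polytope (fst x) \<and> ne_polytope (snd x) \<and> ne_polytope (fst y) \<and> ne_polytope (snd y)
     \<and> (\<exists>R. ne_polytope R \<and> fst x + snd y + R = fst y + snd x + R)"

definition pcls :: "'a::euclidean_space set \<Rightarrow> 'a virt" where
  "pcls P = (P, 0)"

definition gneg :: "'a::euclidean_space virt \<Rightarrow> 'a virt" where
  "gneg x = (snd x, fst x)"

definition zmul :: "int \<Rightarrow> 'a::euclidean_space virt \<Rightarrow> 'a virt" where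
  "zmul k x = (if 0 \<le> k then (\<Sum>i<nat k. x) else (\<Sum>i<nat (- k). gneg x))"

definition refl_poly :: "'a::euclidean_space set \<Rightarrow> 'a set" where
  "refl_poly P = uminus ` P"

end

theory Submission
  imports Defs
begin


definition vtx :: "'a::euclidean_space set \<Rightarrow> 'a set" where
  "vtx P = {x. x extreme_point_of P}"

definition fcs :: "'a::euclidean_space set \<Rightarrow> 'a set set" where
  "fcs P = {F. F face_of P \<and> F \<noteq> {}}"

definition sg :: "'a::euclidean_space set \<Rightarrow> int" where
  "sg F = (-1) ^ nat (aff_dim F)"

lemma ex_max_fin:
  fixes f :: "'b \<Rightarrow> real"
  assumes "finite A" "A \<noteq> {}"
  shows "\<exists>x\<in>A. \<forall>y\<in>A. f y \<le> f x"
proof -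
  obtain x where "x \<in> A" "Max (f ` A) = f x" using obtains_MAX[OF assms] by metis
  then show ?thesis using assms by (metis Max_ge finite_imageI image_eqI)
qed

lemma poly_vtx:
  fixes P :: "'a::euclidean_space set"
  assumes "polytope P"
  shows "finite (vtx P)" "P = convex hull (vtx P)"
proof -
  obtain S where S: "finite S" "P = convex hull S" using assms polytope_def by blast
  have "vtx P \<subseteq> S" using S extreme_point_of_convex_hull by (auto simp: vtx_def)
  then show "finite (vtx P)" using S finite_subset by blast
  show "P = convex hull (vtx P)" using Krein_Milman_polytope[OF S(1)] S(2) by (simp add: vtx_def)
qed

lemma vtx_sub: "vtx P \<subseteq> P"
  by (auto simp: vtx_def extreme_point_of_def)

lemma hull_le:
  fixes P :: "'a::euclidean_space set"
  assumes "P = convex hull V" "\<And>x. x \<in> V \<Longrightarrow> a \<bullet> x \<le> c" "y \<in> P"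
  shows "a \<bullet> y \<le> c"
proof -
  have "convex hull V \<subseteq> {x. a \<bullet> x \<le> c}"
    by (rule hull_minimal) (use assms convex_halfspace_le in auto)
  then show ?thesis using assms by auto
qed

lemma hull_lt:
  fixes P :: "'a::euclidean_space set"
  assumes "P = convex hull V" "\<And>x. x \<in> V \<Longrightarrow> a \<bullet> x < c" "y \<in> P"
  shows "a \<bullet> y < c"
proof -
  have "convex hull V \<subseteq> {x. a \<bullet> x < c}"
    by (rule hull_minimal) (use assms convex_halfspace_lt in auto)
  then show ?thesis using assms by auto
qed

lemma vtx_face: "F face_of P \<Longrightarrow> vtx F = vtx P \<inter> F"
  by (auto simp: vtx_def extreme_point_of_face)

lemma fcs_polytope: "polytope P \<Longrightarrow> F \<in> fcs P \<Longrightarrow> polytope F"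
  by (auto simp: fcs_def face_of_polytope_polytope)

lemma max_at_vtx:
  fixes P :: "'a::euclidean_space set"
  assumes "polytope P" "P \<noteq> {}"
  shows "\<exists>v\<in>vtx P. \<forall>y\<in>P. a \<bullet> y \<le> a \<bullet> v"
proof -
  have V: "finite (vtx P)" "P = convex hull (vtx P)" using poly_vtx assms by auto
  then have ne: "vtx P \<noteq> {}" using assms by auto
  obtain v where v: "v \<in> vtx P" "\<And>x. x \<in> vtx P \<Longrightarrow> a \<bullet> x \<le> a \<bullet> v"
    using ex_max_fin[OF V(1) ne] by blast
  then show ?thesis using hull_le[OF V(2)] by blast
qed

lemma min_at_vtx:
  fixes P :: "'a::euclidean_space set"
  assumes "polytope P" "P \<noteq> {}"
  shows "\<exists>v\<in>vtx P. \<forall>y\<in>P. a \<bullet> v \<le> a \<bullet> y"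
  using max_at_vtx[OF assms, of "-a"] by auto

lemma top_unique:
  fixes F :: "'a::euclidean_space set"
  assumes "polytope F" "inj_on (\<lambda>x. b \<bullet> x) (vtx F)" "v \<in> vtx F" "\<forall>y\<in>F. b \<bullet> y \<le> b \<bullet> v"
  shows "F \<inter> {x. b \<bullet> x = b \<bullet> v} = {v}"
proof -
  let ?G = "F \<inter> {x. b \<bullet> x = b \<bullet> v}"
  have fG: "?G face_of F"
    using assms by (intro face_of_Int_supporting_hyperplane_le) (auto simp: polytope_imp_convex)
  then have pG: "polytope ?G" using assms face_of_polytope_polytope by blast
  have "vtx ?G = vtx F \<inter> ?G" using vtx_face[OF fG] .
  also have "\<dots> = {v}" using assms vtx_sub[of F] by (auto simp: inj_on_def)
  finally have "vtx ?G = {v}" .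
  then show ?thesis using poly_vtx(2)[OF pG] by simp
qed



lemma cross:
  fixes c x z :: "'a::euclidean_space"
  assumes "(c \<bullet> x - l) * (c \<bullet> z - l) < 0"
  shows "\<exists>u. 0 < u \<and> u < 1 \<and> c \<bullet> ((1 - u) *\<^sub>R x + u *\<^sub>R z) = l"
proof -
  define u where "u = (c \<bullet> x - l) / (c \<bullet> x - c \<bullet> z)"
  have ne: "c \<bullet> x - c \<bullet> z \<noteq> 0" using assms by auto
  have "c \<bullet> ((1 - u) *\<^sub>R x + u *\<^sub>R z) = c \<bullet> x - u * (c \<bullet> x - c \<bullet> z)"
    by (simp add: inner_add_right algebra_simps)
  also have "\<dots> = l" using ne by (simp add: u_def)
  finally have e: "c \<bullet> ((1 - u) *\<^sub>R x + u *\<^sub>R z) = l" .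
  have "0 < u \<and> u < 1"
  proof (cases "c \<bullet> x - l > 0")
    case True
    then have "c \<bullet> z - l < 0" using assms by (simp add: mult_less_0_iff)
    then show ?thesis using True by (auto simp: u_def field_simps)
  next
    case False
    then have "c \<bullet> x - l < 0" "c \<bullet> z - l > 0" using assms by (auto simp: mult_less_0_iff)
    then show ?thesis by (auto simp: u_def field_simps)
  qed
  then show ?thesis using e by blast
qed

lemma inner_comb:
  fixes b x z :: "'a::euclidean_space"
  shows "b \<bullet> ((1 - u) *\<^sub>R x + u *\<^sub>R z) = b \<bullet> x + u * (b \<bullet> z - b \<bullet> x)"
  by (simp add: inner_add_right algebra_simps)

lemma conv_comb_in:
  assumes "convex F" "x \<in> F" "z \<in> F" "0 \<le> u" "u \<le> 1"
  shows "(1 - u) *\<^sub>R x + u *\<^sub>R z \<in> F"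
  by (rule convexD[OF assms(1-3)]) (use assms in auto)

locale vfig =
  fixes P :: "'a::euclidean_space set" and v c :: 'a and l :: real
  assumes poly: "polytope P" and vv: "v \<in> vtx P"
    and below: "\<And>y. y \<in> vtx P \<Longrightarrow> y \<noteq> v \<Longrightarrow> c \<bullet> y < l"
    and above: "l < c \<bullet> v"
begin

definition H where "H = {x. c \<bullet> x = l}"

lemma vH: "v \<notin> H" using above by (simp add: H_def)

lemma seg:
  assumes "y \<in> vtx P" "y \<noteq> v"
  shows "\<exists>u. 0 < u \<and> u < 1 \<and> (1 - u) *\<^sub>R v + u *\<^sub>R y \<in> H"
proof -
  have "(c \<bullet> v - l) * (c \<bullet> y - l) < 0"
    using below[OF assms] above by (simp add: mult_pos_neg)
  then show ?thesis using cross[of c v l y] by (auto simp: H_def)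
qed

lemma other_vtx:
  assumes "F face_of P" "v \<in> F" "F \<noteq> {v}"
  shows "\<exists>y\<in>vtx F. y \<noteq> v"
proof (rule ccontr)
  assume "\<not> ?thesis"
  moreover have "v \<in> vtx F" using vtx_face[OF assms(1)] vv assms(2) by simp
  ultimately have "vtx F = {v}" by blast
  then show False using poly_vtx(2)[OF face_of_polytope_polytope[OF poly assms(1)]] assms(3) by simp
qed

lemma vtxF: "F face_of P \<Longrightarrow> y \<in> vtx F \<Longrightarrow> y \<in> vtx P"
  by (simp add: vtx_face)

lemma A1:
  assumes "F face_of P" "v \<in> F" "F \<noteq> {v}"
  shows "F \<inter> H \<noteq> {}"
proof -
  obtain y where y: "y \<in> vtx F" "y \<noteq> v" using other_vtx[OF assms] by blast
  obtain u where u: "0 < u" "u < 1" "(1 - u) *\<^sub>R v + u *\<^sub>R y \<in> H"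
    using seg[OF vtxF[OF assms(1) y(1)] y(2)] by blast
  have "y \<in> F" using y(1) vtx_sub by blast
  then have "(1 - u) *\<^sub>R v + u *\<^sub>R y \<in> F"
    using u by (intro conv_comb_in[OF face_of_imp_convex[OF assms(1)] assms(2)]) auto
  then show ?thesis using u by blast
qed

lemma A2:
  assumes "F face_of P" "v \<in> F" "F \<noteq> {v}"
  shows "rel_interior F \<inter> H \<noteq> {}"
proof -
  have cF: "convex F" using face_of_imp_convex[OF assms(1)] .
  obtain x where x: "x \<in> rel_interior F" using rel_interior_eq_empty[OF cF] assms(2) by blast
  obtain y where y: "y \<in> vtx F" "y \<noteq> v" using other_vtx[OF assms] by blast
  have yF: "y \<in> F" using y vtx_sub by blast
  have cy: "c \<bullet> y < l" using below[OF vtxF[OF assms(1) y(1)] y(2)] .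
  have key: "rel_interior F \<inter> H \<noteq> {}" if zF: "z \<in> F" and neg: "(c \<bullet> x - l) * (c \<bullet> z - l) < 0" for z
  proof -
    obtain u where u: "0 < u" "u < 1" "c \<bullet> ((1 - u) *\<^sub>R x + u *\<^sub>R z) = l"
      using cross[OF neg] by blast
    have "x \<noteq> z" using neg by auto
    then have "(1 - u) *\<^sub>R x + u *\<^sub>R z \<in> open_segment x z" using u in_segment(2) by blast
    moreover have "open_segment x z \<subseteq> rel_interior F"
      using rel_interior_closure_convex_segment[OF cF x] zF closure_subset by blast
    ultimately show ?thesis using u(3) by (auto simp: H_def)
  qed
  consider "c \<bullet> x = l" | "c \<bullet> x < l" | "c \<bullet> x > l" by linarith
  then show ?thesis
  proof cases
    case 1 then show ?thesis using x by (auto simp: H_def)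
  next
    case 2 then show ?thesis using key[OF assms(2)] above by (simp add: mult_neg_pos)
  next
    case 3 then show ?thesis using key[OF yF] cy by (simp add: mult_pos_neg)
  qed
qed


lemma A3:
  assumes "F face_of P" "v \<in> F" "F \<noteq> {v}"
  shows "aff_dim (F \<inter> H) = aff_dim F - 1"
proof -
  obtain x where x: "x \<in> rel_interior F" "x \<in> H" using A2[OF assms] by blast
  obtain e where e: "e > 0" "ball x e \<inter> affine hull F \<subseteq> F"
    using x(1) mem_rel_interior_ball by blast
  define S where "S = affine hull F \<inter> H"
  have cS: "convex S" unfolding S_def H_def
    by (intro convex_Int convex_affine_hull convex_hyperplane)
  have xF: "x \<in> F" using x(1) rel_interior_subset by blast
  then have xS: "x \<in> S" using x(2) hull_subset[of F affine] by (auto simp: S_def)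
  have 1: "aff_dim (S \<inter> ball x e) = aff_dim S"
    by (rule aff_dim_convex_Int_open[OF cS open_ball]) (use xS e in auto)
  have sub1: "S \<inter> ball x e \<subseteq> F \<inter> H" using e by (auto simp: S_def)
  have sub2: "F \<inter> H \<subseteq> S" using hull_subset[of F affine] by (auto simp: S_def)
  have 2: "aff_dim (F \<inter> H) = aff_dim S"
    using aff_dim_subset[OF sub1] aff_dim_subset[OF sub2] 1 by linarith
  have vA: "v \<in> affine hull F" using assms(2) hull_subset[of F affine] by blast
  have 3: "aff_dim S = aff_dim (affine hull F) - 1"
    unfolding S_def H_def
    using aff_dim_affine_Int_hyperplane[OF affine_affine_hull[of F], of c l] xS vA above
    by (auto simp: S_def H_def split: if_splits)
  show ?thesis using 2 3 by (simp add: aff_dim_affine_hull)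
qed

lemma A4:
  assumes "F1 face_of P" "v \<in> F1" "F1 \<noteq> {v}" "F2 face_of P" "F1 \<inter> H = F2 \<inter> H"
  shows "F1 \<subseteq> F2"
proof -
  obtain x where x: "x \<in> rel_interior F1" "x \<in> H" using A2[OF assms(1-3)] by blast
  have "x \<in> F2" using x rel_interior_subset assms(5) by blast
  then have "F2 \<inter> rel_interior F1 \<noteq> {}" using x by blast
  then show ?thesis using subset_of_face_of[OF assms(4) face_of_imp_subset[OF assms(1)]] by blast
qed

lemma A5:
  assumes "G face_of (P \<inter> H)" "G \<noteq> {}"
  shows "\<exists>F. F face_of P \<and> v \<in> F \<and> F \<noteq> {v} \<and> F \<inter> H = G"
proof -
  have pQ: "polytope (P \<inter> H)"
    by (simp add: H_def polytope_Int_polyhedron poly polyhedron_hyperplane)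
  have "G exposed_face_of (P \<inter> H)"
    using exposed_face_of_polyhedron[OF polytope_imp_polyhedron[OF pQ]] assms(1) by simp
  then obtain a e where ae: "P \<inter> H \<subseteq> {x. a \<bullet> x \<le> e}" "G = P \<inter> H \<inter> {x. a \<bullet> x = e}"
    unfolding exposed_face_of_def by blast
  define \<mu> where "\<mu> = (e - a \<bullet> v) / (c \<bullet> v - l)"
  define g where "g = a + \<mu> *\<^sub>R c"
  define \<kappa> where "\<kappa> = e + \<mu> * l"
  have gv: "g \<bullet> v = \<kappa>"
  proof -
    have "\<mu> * (c \<bullet> v - l) = e - a \<bullet> v" using above by (simp add: \<mu>_def)
    then show ?thesis by (simp add: g_def \<kappa>_def inner_add_left algebra_simps)
  qed
  have vP: "v \<in> P" using vv vtx_sub by blast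
  have cP: "convex P" using poly polytope_imp_convex by blast
  have gy: "g \<bullet> y \<le> \<kappa>" if yV: "y \<in> vtx P" for y
  proof (cases "y = v")
    case True then show ?thesis using gv by simp
  next
    case False
    obtain u where u: "0 < u" "u < 1" "(1 - u) *\<^sub>R v + u *\<^sub>R y \<in> H" using seg[OF yV False] by blast
    define p where "p = (1 - u) *\<^sub>R v + u *\<^sub>R y"
    have "y \<in> P" using yV vtx_sub by blast
    then have pP: "p \<in> P" unfolding p_def using u by (intro conv_comb_in[OF cP vP]) auto
    have pH: "c \<bullet> p = l" using u(3) by (simp add: p_def H_def)
    have "a \<bullet> p \<le> e" using ae(1) pP u(3) by (auto simp: p_def)
    then have "g \<bullet> p \<le> \<kappa>" using pH by (simp add: g_def \<kappa>_def inner_add_left)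
    moreover have "g \<bullet> p = \<kappa> + u * (g \<bullet> y - \<kappa>)" using gv by (simp add: p_def inner_comb)
    ultimately have "u * (g \<bullet> y - \<kappa>) \<le> 0" by linarith
    then show ?thesis using u(1) by (simp add: mult_le_0_iff)
  qed
  have gP: "\<And>y. y \<in> P \<Longrightarrow> g \<bullet> y \<le> \<kappa>"
    using hull_le[OF poly_vtx(2)[OF poly]] gy by blast
  define F where "F = P \<inter> {x. g \<bullet> x = \<kappa>}"
  have fF: "F face_of P" unfolding F_def using gP cP by (intro face_of_Int_supporting_hyperplane_le) auto
  have vF: "v \<in> F" using vP gv by (simp add: F_def)
  have FH: "F \<inter> H = G"
    using ae(2) by (auto simp: F_def H_def g_def \<kappa>_def inner_add_left)
  have "F \<noteq> {v}" using FH assms(2) vH by auto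
  then show ?thesis using fF vF FH by blast
qed

lemma A6:
  assumes "F face_of P" "v \<in> F" "F \<noteq> {v}" "inj_on (\<lambda>x. b \<bullet> x) (vtx P)"
  shows "(\<forall>y\<in>F. b \<bullet> y \<le> b \<bullet> v) \<longleftrightarrow> (\<forall>p\<in>F \<inter> H. b \<bullet> p < b \<bullet> v)"
proof
  have pF: "polytope F" using face_of_polytope_polytope[OF poly assms(1)] .
  have vF: "v \<in> vtx F" using vtx_face[OF assms(1)] vv assms(2) by simp
  have inj: "inj_on (\<lambda>x. b \<bullet> x) (vtx F)"
    using inj_on_subset[OF assms(4)] vtx_face[OF assms(1)] by auto
  assume le: "\<forall>y\<in>F. b \<bullet> y \<le> b \<bullet> v"
  have top: "F \<inter> {x. b \<bullet> x = b \<bullet> v} = {v}" using top_unique[OF pF inj vF le] .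
  show "\<forall>p\<in>F \<inter> H. b \<bullet> p < b \<bullet> v"
  proof
    fix p assume p: "p \<in> F \<inter> H"
    have "p \<noteq> v" using p vH by blast
    then have "b \<bullet> p \<noteq> b \<bullet> v" using top p by blast
    then show "b \<bullet> p < b \<bullet> v" using le p by force
  qed
next
  have pF: "polytope F" using face_of_polytope_polytope[OF poly assms(1)] .
  have cF: "convex F" using face_of_imp_convex[OF assms(1)] .
  assume lt: "\<forall>p\<in>F \<inter> H. b \<bullet> p < b \<bullet> v"
  have "b \<bullet> y \<le> b \<bullet> v" if yV: "y \<in> vtx F" for y
  proof (cases "y = v")
    case True then show ?thesis by simp
  next
    case False
    have yP: "y \<in> vtx P" using vtxF[OF assms(1) yV] .
    obtain u where u: "0 < u" "u < 1" "(1 - u) *\<^sub>R v + u *\<^sub>R y \<in> H" using seg[OF yP False] by blast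
    have "y \<in> F" using yV vtx_sub by blast
    then have "(1 - u) *\<^sub>R v + u *\<^sub>R y \<in> F" using u by (intro conv_comb_in[OF cF assms(2)]) auto
    then have "b \<bullet> ((1 - u) *\<^sub>R v + u *\<^sub>R y) < b \<bullet> v" using lt u(3) by blast
    then have "u * (b \<bullet> y - b \<bullet> v) < 0" by (simp add: inner_comb)
    then show ?thesis using u(1) by (simp add: mult_less_0_iff)
  qed
  then show "\<forall>y\<in>F. b \<bullet> y \<le> b \<bullet> v" using hull_le[OF poly_vtx(2)[OF pF]] by blast
qed

lemma A7:
  assumes "\<exists>y\<in>P. b \<bullet> y < b \<bullet> v"
  shows "\<exists>p\<in>P \<inter> H. b \<bullet> p < b \<bullet> v"
proof -
  obtain y where yV: "y \<in> vtx P" and yb: "b \<bullet> y < b \<bullet> v"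
  proof (rule ccontr)
    assume "\<not> thesis"
    then have "\<And>y. y \<in> vtx P \<Longrightarrow> (-b) \<bullet> y \<le> - (b \<bullet> v)" using that by force
    then have "\<And>y. y \<in> P \<Longrightarrow> (-b) \<bullet> y \<le> - (b \<bullet> v)" using hull_le[OF poly_vtx(2)[OF poly]] by blast
    then show False using assms by force
  qed
  have "y \<noteq> v" using yb by auto
  then obtain u where u: "0 < u" "u < 1" "(1 - u) *\<^sub>R v + u *\<^sub>R y \<in> H" using seg[OF yV] by blast
  have vP: "v \<in> P" using vv vtx_sub by blast
  have "y \<in> P" using yV vtx_sub by blast
  then have "(1 - u) *\<^sub>R v + u *\<^sub>R y \<in> P" using u
    by (intro conv_comb_in[OF polytope_imp_convex[OF poly] vP]) auto
  moreover have "b \<bullet> ((1 - u) *\<^sub>R v + u *\<^sub>R y) < b \<bullet> v"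
    using u(1) yb by (simp add: inner_comb mult_pos_neg)
  ultimately show ?thesis using u(3) by blast
qed

end



lemma fcs_finite: "polytope P \<Longrightarrow> finite (fcs P)"
  unfolding fcs_def using finite_polytope_faces by (metis (no_types, lifting) finite_subset mem_Collect_eq subsetI)

lemma sg_sing [simp]: "sg {v} = 1"
  by (simp add: sg_def)

lemma core_step:
  fixes P :: "'a::euclidean_space set"
  assumes poly: "polytope P" and vv: "v \<in> vtx P" and inj: "inj_on (\<lambda>x. b \<bullet> x) (vtx P)"
    and IH: "\<And>(Q::'a set) a t. polytope Q \<Longrightarrow> aff_dim Q < aff_dim P \<Longrightarrow> (\<exists>x\<in>Q. a \<bullet> x < t) \<Longrightarrow>
               (\<Sum>F\<in>{F\<in>fcs Q. F \<subseteq> {x. a \<bullet> x < t}}. sg F) = 1"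
  shows "(\<Sum>F\<in>{F\<in>fcs P. v \<in> F \<and> (\<forall>y\<in>F. b \<bullet> y \<le> b \<bullet> v)}. sg F)
           = (if \<forall>y\<in>P. b \<bullet> v \<le> b \<bullet> y then 1 else 0)"
proof (cases "P = {v}")
  case True
  have "fcs P = {{v}}"
    using True by (auto simp: fcs_def face_of_refl dest: face_of_imp_subset)
  then have "{F\<in>fcs P. v \<in> F \<and> (\<forall>y\<in>F. b \<bullet> y \<le> b \<bullet> v)} = {{v}}" by auto
  then show ?thesis using True by simp
next
  case False
  have vP: "v \<in> P" using vv vtx_sub by blast
  have cP: "convex P" using poly polytope_imp_convex by blast
  have "{v} face_of P" using vv by (simp add: face_of_singleton vtx_def)
  then have "{v} exposed_face_of P"
    using exposed_face_of_polyhedron[OF polytope_imp_polyhedron[OF poly]] by simp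
  then obtain c d where cd: "P \<subseteq> {x. c \<bullet> x \<le> d}" "{v} = P \<inter> {x. c \<bullet> x = d}"
    unfolding exposed_face_of_def by blast
  have cv: "c \<bullet> v = d" using cd(2) by blast
  define W where "W = vtx P - {v}"
  have fW: "finite W" using poly_vtx(1)[OF poly] by (simp add: W_def)
  have neW: "W \<noteq> {}"
  proof
    assume "W = {}"
    then have "vtx P = {v}" using vv by (auto simp: W_def)
    then show False using poly_vtx(2)[OF poly] False by simp
  qed
  obtain w0 where w0: "w0 \<in> W" "\<And>y. y \<in> W \<Longrightarrow> c \<bullet> y \<le> c \<bullet> w0"
    using ex_max_fin[OF fW neW, of "\<lambda>x. c \<bullet> x"] by blast
  have w0P: "w0 \<in> P" "w0 \<noteq> v" using w0(1) vtx_sub by (auto simp: W_def)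
  have md: "c \<bullet> w0 < d"
  proof -
    have "c \<bullet> w0 \<le> d" using cd(1) w0P by blast
    moreover have "c \<bullet> w0 \<noteq> d" using cd(2) w0P by blast
    ultimately show ?thesis by simp
  qed
  define l where "l = (c \<bullet> w0 + d) / 2"
  interpret vf: vfig P v c l
  proof
    show "polytope P" by fact
    show "v \<in> vtx P" by fact
    show "c \<bullet> y < l" if "y \<in> vtx P" "y \<noteq> v" for y
      using w0(2)[of y] that md by (auto simp: W_def l_def)
    show "l < c \<bullet> v" using md cv by (simp add: l_def)
  qed
  define H where "H = vfig.H c l"
  note Hd = vf.H_def[folded H_def]
  note A1 = vf.A1[folded H_def] and A3 = vf.A3[folded H_def] and A4 = vf.A4[folded H_def]
    and A5 = vf.A5[folded H_def] and A6 = vf.A6[folded H_def] and A7 = vf.A7[folded H_def]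
  define S' where "S' = {F. F face_of P \<and> v \<in> F \<and> F \<noteq> {v} \<and> (\<forall>y\<in>F. b \<bullet> y \<le> b \<bullet> v)}"
  define T where "T = {G\<in>fcs (P \<inter> H). G \<subseteq> {x. b \<bullet> x < b \<bullet> v}}"
  have S0: "{F\<in>fcs P. v \<in> F \<and> (\<forall>y\<in>F. b \<bullet> y \<le> b \<bullet> v)} = insert {v} S'"
    using \<open>{v} face_of P\<close> by (auto simp: fcs_def S'_def)
  have fS': "finite S'"
    using finite_polytope_faces[OF poly] by (rule finite_subset[rotated]) (auto simp: S'_def)
  have nS': "{v} \<notin> S'" by (simp add: S'_def)
  have bij: "bij_betw (\<lambda>F. F \<inter> H) S' T"
    unfolding bij_betw_def
  proof
    show "inj_on (\<lambda>F. F \<inter> H) S'"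
    proof (rule inj_onI)
      fix F1 F2 assume "F1 \<in> S'" "F2 \<in> S'" "F1 \<inter> H = F2 \<inter> H"
      then have "F1 face_of P" "v \<in> F1" "F1 \<noteq> {v}" "F2 face_of P" "v \<in> F2" "F2 \<noteq> {v}"
        "F1 \<inter> H = F2 \<inter> H" by (auto simp: S'_def)
      then show "F1 = F2" using A4 by (metis subset_antisym)
    qed
    show "(\<lambda>F. F \<inter> H) ` S' = T"
    proof
      show "(\<lambda>F. F \<inter> H) ` S' \<subseteq> T"
      proof
        fix G assume "G \<in> (\<lambda>F. F \<inter> H) ` S'"
        then obtain F where F: "F \<in> S'" "G = F \<inter> H" by blast
        have f: "F face_of P" "v \<in> F" "F \<noteq> {v}" using F by (auto simp: S'_def)
        have "G face_of (P \<inter> H)" unfolding F(2) Hd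
          by (rule face_of_slice[OF f(1) convex_hyperplane])
        moreover have "G \<noteq> {}" using A1[OF f] F by simp
        moreover have "G \<subseteq> {x. b \<bullet> x < b \<bullet> v}" using A6[OF f inj] F by (auto simp: S'_def)
        ultimately show "G \<in> T" by (simp add: T_def fcs_def)
      qed
      show "T \<subseteq> (\<lambda>F. F \<inter> H) ` S'"
      proof
        fix G assume G: "G \<in> T"
        then obtain F where F: "F face_of P" "v \<in> F" "F \<noteq> {v}" "F \<inter> H = G"
          using A5 by (auto simp: T_def fcs_def)
        have "\<forall>y\<in>F. b \<bullet> y \<le> b \<bullet> v" using A6[OF F(1-3) inj] F(4) G by (auto simp: T_def)
        then have "F \<in> S'" using F by (simp add: S'_def)
        then show "G \<in> (\<lambda>F. F \<inter> H) ` S'" using F(4) by blast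
      qed
    qed
  qed
  have sgS: "sg F = - sg (F \<inter> H)" if "F \<in> S'" for F
  proof -
    have f: "F face_of P" "v \<in> F" "F \<noteq> {v}" using that by (auto simp: S'_def)
    have a: "aff_dim (F \<inter> H) = aff_dim F - 1" using A3[OF f] .
    have "aff_dim (F \<inter> H) \<ge> 0" using A1[OF f] aff_dim_negative_iff[of "F \<inter> H"] by linarith
    then have "nat (aff_dim F) = Suc (nat (aff_dim (F \<inter> H)))" using a by linarith
    then show ?thesis by (simp add: sg_def)
  qed
  have "(\<Sum>F\<in>S'. sg F) = (\<Sum>F\<in>S'. - sg (F \<inter> H))" using sgS by (rule sum.cong[OF refl])
  also have "\<dots> = (\<Sum>G\<in>T. - sg G)" using sum.reindex_bij_betw[OF bij, of "\<lambda>G. - sg G"] .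
  finally have sS: "(\<Sum>F\<in>S'. sg F) = - (\<Sum>G\<in>T. sg G)" by (simp add: sum_negf)
  have sT: "(\<Sum>G\<in>T. sg G) = (if \<exists>x\<in>P \<inter> H. b \<bullet> x < b \<bullet> v then 1 else 0)"
  proof (cases "\<exists>x\<in>P \<inter> H. b \<bullet> x < b \<bullet> v")
    case True
    have pQ: "polytope (P \<inter> H)"
      by (simp add: Hd polytope_Int_polyhedron poly polyhedron_hyperplane)
    have "aff_dim (P \<inter> H) = aff_dim P - 1" using A3[OF face_of_refl[OF cP] vP False] .
    then have lt: "aff_dim (P \<inter> H) < aff_dim P" by simp
    show ?thesis using IH[OF pQ lt True] True by (simp add: T_def)
  next
    case False
    have "T = {}"
    proof (rule ccontr)
      assume "T \<noteq> {}"
      then obtain G x where "G \<in> T" "x \<in> G" by (auto simp: T_def fcs_def)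
      then show False using False by (auto simp: T_def fcs_def dest: face_of_imp_subset)
    qed
    then show ?thesis using False by simp
  qed
  show ?thesis
  proof (cases "\<forall>y\<in>P. b \<bullet> v \<le> b \<bullet> y")
    case True
    then have "\<not> (\<exists>x\<in>P \<inter> H. b \<bullet> x < b \<bullet> v)" by force
    then show ?thesis using True S0 sS sT fS' nS' by simp
  next
    case False
    then have "\<exists>y\<in>P. b \<bullet> y < b \<bullet> v" by force
    then have "\<exists>x\<in>P \<inter> H. b \<bullet> x < b \<bullet> v" using A7 by blast
    then show ?thesis using False S0 sS sT fS' nS' by simp
  qed
qed



lemma small_pos:
  fixes c k :: "'i \<Rightarrow> real"
  assumes "finite I" "\<And>i. i \<in> I \<Longrightarrow> 0 < c i"
  shows "\<exists>\<epsilon>>0. \<forall>i\<in>I. \<epsilon> * k i < c i"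
proof -
  have "\<forall>i\<in>I. eventually (\<lambda>\<epsilon>. \<epsilon> * k i < c i) (at_right 0)"
  proof
    fix i assume i: "i \<in> I"
    have "((\<lambda>\<epsilon>::real. \<epsilon> * k i) \<longlongrightarrow> 0 * k i) (at_right 0)"
      by (intro tendsto_intros)
    then have "((\<lambda>\<epsilon>::real. \<epsilon> * k i) \<longlongrightarrow> 0) (at_right 0)" by simp
    from order_tendstoD(2)[OF this assms(2)[OF i]]
    show "eventually (\<lambda>\<epsilon>. \<epsilon> * k i < c i) (at_right 0)" .
  qed
  then have "eventually (\<lambda>\<epsilon>. \<forall>i\<in>I. \<epsilon> * k i < c i) (at_right 0)"
    by (rule eventually_ball_finite[OF assms(1)])
  then have "eventually (\<lambda>\<epsilon>. 0 < \<epsilon> \<and> (\<forall>i\<in>I. \<epsilon> * k i < c i)) (at_right (0::real))"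
    by (rule eventually_conj[OF eventually_at_right_less])
  then obtain \<epsilon> where "0 < \<epsilon> \<and> (\<forall>i\<in>I. \<epsilon> * k i < c i)"
    using eventually_happens'[of "at_right (0::real)"] by auto
  then show ?thesis by blast
qed

lemma gen_dir:
  fixes D :: "'a::euclidean_space set"
  assumes "finite D" "0 \<notin> D"
  shows "\<exists>w. \<forall>d\<in>D. w \<bullet> d \<noteq> 0"
  using assms
proof (induction D rule: finite_induct)
  case empty then show ?case by simp
next
  case (insert d0 D)
  then obtain w where w: "\<forall>d\<in>D. w \<bullet> d \<noteq> 0" by auto
  show ?case
  proof (cases "w \<bullet> d0 = 0")
    case False then show ?thesis using w by auto
  next
    case True
    obtain lam where l: "lam > 0" "\<forall>d\<in>D. lam * \<bar>d0 \<bullet> d\<bar> < \<bar>w \<bullet> d\<bar>"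
      using small_pos[OF insert(1), of "\<lambda>d. \<bar>w \<bullet> d\<bar>" "\<lambda>d. \<bar>d0 \<bullet> d\<bar>"] w by auto
    have d0: "d0 \<noteq> 0" using insert by auto
    have "(w + lam *\<^sub>R d0) \<bullet> d \<noteq> 0" if "d \<in> insert d0 D" for d
    proof (cases "d = d0")
      case True
      then show ?thesis using \<open>w \<bullet> d0 = 0\<close> l(1) d0 by (simp add: inner_add_left)
    next
      case False
      then have dD: "d \<in> D" using that by auto
      have "\<bar>lam * (d0 \<bullet> d)\<bar> < \<bar>w \<bullet> d\<bar>" using l dD by (simp add: abs_mult)
      then show ?thesis by (auto simp: inner_add_left)
    qed
    then show ?thesis by blast
  qed
qed

lemma pert:
  fixes V :: "'a::euclidean_space set"
  assumes "finite V" "\<delta> > 0"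
  shows "\<exists>b. inj_on (\<lambda>x. b \<bullet> x) V \<and> (\<forall>x\<in>V. \<forall>y\<in>V. a \<bullet> x < a \<bullet> y \<longrightarrow> b \<bullet> x < b \<bullet> y)
            \<and> (\<forall>x\<in>V. \<bar>b \<bullet> x - a \<bullet> x\<bar> < \<delta>)"
proof -
  define D where "D = (\<lambda>(x, y). x - y) ` {p\<in>V \<times> V. fst p \<noteq> snd p}"
  have "finite D" using assms(1) by (simp add: D_def)
  moreover have "0 \<notin> D" by (auto simp: D_def)
  ultimately obtain w where w: "\<forall>d\<in>D. w \<bullet> d \<noteq> 0" using gen_dir by blast
  have wxy: "w \<bullet> (x - y) \<noteq> 0" if "x \<in> V" "y \<in> V" "x \<noteq> y" for x y
    using w that by (force simp: D_def)
  obtain e1 where e1: "e1 > 0" "\<forall>p\<in>V \<times> V. e1 * \<bar>w \<bullet> (fst p - snd p)\<bar>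
      < (if a \<bullet> fst p \<noteq> a \<bullet> snd p then \<bar>a \<bullet> fst p - a \<bullet> snd p\<bar> else 1)"
    apply (rule small_pos[of "V \<times> V" "\<lambda>p. if a \<bullet> fst p \<noteq> a \<bullet> snd p then \<bar>a \<bullet> fst p - a \<bullet> snd p\<bar> else 1"
        "\<lambda>p. \<bar>w \<bullet> (fst p - snd p)\<bar>", THEN exE])
    using assms(1) by auto
  obtain e2 where e2: "e2 > 0" "\<forall>x\<in>V. e2 * \<bar>w \<bullet> x\<bar> < \<delta>"
    using small_pos[of V "\<lambda>_. \<delta>" "\<lambda>x. \<bar>w \<bullet> x\<bar>"] assms by auto
  define e where "e = min e1 e2"
  have e: "e > 0" "e \<le> e1" "e \<le> e2" using e1 e2 by (auto simp: e_def)
  define b where "b = a + e *\<^sub>R w"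
  have bx: "b \<bullet> x = a \<bullet> x + e * (w \<bullet> x)" for x by (simp add: b_def inner_add_left)
  have ep: "e * \<bar>w \<bullet> (x - y)\<bar> < (if a \<bullet> x \<noteq> a \<bullet> y then \<bar>a \<bullet> x - a \<bullet> y\<bar> else 1)"
    if "x \<in> V" "y \<in> V" for x y
  proof -
    have "e * \<bar>w \<bullet> (x - y)\<bar> \<le> e1 * \<bar>w \<bullet> (x - y)\<bar>" using e by (intro mult_right_mono) auto
    then show ?thesis using e1(2) that by fastforce
  qed
  have ord: "b \<bullet> x < b \<bullet> y" if "x \<in> V" "y \<in> V" "a \<bullet> x < a \<bullet> y" for x y
  proof -
    have "e * \<bar>w \<bullet> (x - y)\<bar> < a \<bullet> y - a \<bullet> x" using ep[OF that(1,2)] that(3) by auto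
    moreover have "e * (w \<bullet> (x - y)) \<le> e * \<bar>w \<bullet> (x - y)\<bar>" using e(1) by (intro mult_left_mono) auto
    ultimately show ?thesis by (simp add: bx inner_diff_right algebra_simps)
  qed
  have inj: "inj_on (\<lambda>x. b \<bullet> x) V"
  proof (rule inj_onI, rule ccontr)
    fix x y assume xy: "x \<in> V" "y \<in> V" "b \<bullet> x = b \<bullet> y" "x \<noteq> y"
    then have eq: "a \<bullet> x - a \<bullet> y = - (e * (w \<bullet> (x - y)))" by (simp add: bx inner_diff_right algebra_simps)
    show False
    proof (cases "a \<bullet> x = a \<bullet> y")
      case True
      then have "e * (w \<bullet> (x - y)) = 0" using eq by simp
      then show False using e(1) wxy[OF xy(1,2,4)] by simp
    next
      case False
      then have "e * \<bar>w \<bullet> (x - y)\<bar> < \<bar>a \<bullet> x - a \<bullet> y\<bar>" using ep[OF xy(1,2)] by simp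
      then show False using eq e(1) by (simp add: abs_mult)
    qed
  qed
  have cl: "\<bar>b \<bullet> x - a \<bullet> x\<bar> < \<delta>" if "x \<in> V" for x
  proof -
    have "e * \<bar>w \<bullet> x\<bar> \<le> e2 * \<bar>w \<bullet> x\<bar>" using e by (intro mult_right_mono) auto
    then show ?thesis using e2(2) that e(1) by (fastforce simp: bx abs_mult)
  qed
  show ?thesis using inj ord cl by blast
qed



definition topv :: "'a::euclidean_space \<Rightarrow> 'a set \<Rightarrow> 'a" where
  "topv b F = (SOME v. v \<in> vtx F \<and> (\<forall>y\<in>F. b \<bullet> y \<le> b \<bullet> v))"

lemma topv: "polytope F \<Longrightarrow> F \<noteq> {} \<Longrightarrow> topv b F \<in> vtx F \<and> (\<forall>y\<in>F. b \<bullet> y \<le> b \<bullet> topv b F)"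
  unfolding topv_def by (rule someI_ex) (use max_at_vtx in blast)

lemma topv_fcs:
  assumes P: "polytope P" and inj: "inj_on (\<lambda>x. b \<bullet> x) (vtx P)" and F: "F \<in> fcs P" and v: "v \<in> vtx P"
  shows "topv b F = v \<longleftrightarrow> v \<in> F \<and> (\<forall>y\<in>F. b \<bullet> y \<le> b \<bullet> v)"
proof -
  have fF: "F face_of P" "F \<noteq> {}" using F by (auto simp: fcs_def)
  have pF: "polytope F" using face_of_polytope_polytope[OF P fF(1)] .
  have vF: "vtx F = vtx P \<inter> F" using vtx_face[OF fF(1)] .
  have t: "topv b F \<in> vtx F" "\<forall>y\<in>F. b \<bullet> y \<le> b \<bullet> topv b F" using topv[OF pF fF(2)] by auto
  show ?thesis
  proof
    assume "topv b F = v" then show "v \<in> F \<and> (\<forall>y\<in>F. b \<bullet> y \<le> b \<bullet> v)" using t vF by auto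
  next
    assume a: "v \<in> F \<and> (\<forall>y\<in>F. b \<bullet> y \<le> b \<bullet> v)"
    have tP: "topv b F \<in> vtx P" "topv b F \<in> F" using t vF by auto
    have "b \<bullet> topv b F = b \<bullet> v" using a t tP by (meson order.antisym)
    then show "topv b F = v" using inj tP(1) v by (auto simp: inj_on_def)
  qed
qed

definition Kprop :: "'a::euclidean_space set \<Rightarrow> bool" where
  "Kprop P \<longleftrightarrow> (\<forall>a t. (\<exists>x\<in>P. a \<bullet> x < t) \<longrightarrow> (\<Sum>F\<in>{F\<in>fcs P. F \<subseteq> {x. a \<bullet> x < t}}. sg F) = 1)"

lemma core_gen:
  fixes P :: "'a::euclidean_space set"
  assumes P: "polytope P" and IH: "\<And>Q::'a set. polytope Q \<Longrightarrow> aff_dim Q < aff_dim P \<Longrightarrow> Kprop Q"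
    and inj: "inj_on (\<lambda>x. b \<bullet> x) (vtx P)" and v: "v \<in> vtx P"
  shows "(\<Sum>F\<in>{F\<in>fcs P. topv b F = v}. sg F) = (if \<forall>y\<in>P. b \<bullet> v \<le> b \<bullet> y then 1 else 0)"
proof -
  have "{F\<in>fcs P. topv b F = v} = {F\<in>fcs P. v \<in> F \<and> (\<forall>y\<in>F. b \<bullet> y \<le> b \<bullet> v)}"
    using topv_fcs[OF P inj _ v] by blast
  then show ?thesis using core_step[OF P v inj] IH by (simp add: Kprop_def)
qed

lemma K_step:
  fixes P :: "'a::euclidean_space set"
  assumes P: "polytope P" and IH: "\<And>Q::'a set. polytope Q \<Longrightarrow> aff_dim Q < aff_dim P \<Longrightarrow> Kprop Q"
  shows "Kprop P"
  unfolding Kprop_def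
proof (intro allI impI)
  fix a t assume ex: "\<exists>x\<in>P. a \<bullet> x < t"
  define V where "V = vtx P"
  have fV: "finite V" and PV: "P = convex hull V" using poly_vtx[OF P] by (auto simp: V_def)
  define VL where "VL = {x\<in>V. a \<bullet> x < t}"
  have neVL: "VL \<noteq> {}"
  proof
    assume "VL = {}"
    then have "\<And>x. x \<in> V \<Longrightarrow> (-a) \<bullet> x \<le> -t" by (force simp: VL_def)
    then have "\<And>x. x \<in> P \<Longrightarrow> (-a) \<bullet> x \<le> -t" using hull_le[OF PV] by blast
    then show False using ex by force
  qed
  have fVL: "finite VL" using fV by (simp add: VL_def)
  obtain x0 where x0: "x0 \<in> VL" "\<And>y. y \<in> VL \<Longrightarrow> a \<bullet> y \<le> a \<bullet> x0"
    using ex_max_fin[OF fVL neVL, of "\<lambda>x. a \<bullet> x"] by blast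
  define \<delta> where "\<delta> = (t - a \<bullet> x0) / 2"
  have dpos: "\<delta> > 0" using x0 by (simp add: \<delta>_def VL_def)
  obtain b where inj: "inj_on (\<lambda>x. b \<bullet> x) V" and cl: "\<forall>x\<in>V. \<bar>b \<bullet> x - a \<bullet> x\<bar> < \<delta>"
    using pert[OF fV dpos, of a] by blast
  define t' where "t' = t - \<delta>"
  have equiv: "a \<bullet> x < t \<longleftrightarrow> b \<bullet> x < t'" if "x \<in> V" for x
  proof
    assume "a \<bullet> x < t"
    then have "a \<bullet> x \<le> a \<bullet> x0" using x0(2) that by (simp add: VL_def)
    moreover have "\<bar>b \<bullet> x - a \<bullet> x\<bar> < \<delta>" using cl that by blast
    moreover have "a \<bullet> x0 + \<delta> = t - \<delta>" by (simp add: \<delta>_def field_simps)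
    ultimately show "b \<bullet> x < t'" unfolding t'_def by (simp add: abs_less_iff)
  next
    assume "b \<bullet> x < t'"
    moreover have "\<bar>b \<bullet> x - a \<bullet> x\<bar> < \<delta>" using cl that by blast
    ultimately show "a \<bullet> x < t" using dpos unfolding t'_def by (simp add: abs_less_iff)
  qed
  have sub_iff: "F \<subseteq> {x. a \<bullet> x < t} \<longleftrightarrow> F \<subseteq> {x. b \<bullet> x < t'}" if F: "F \<in> fcs P" for F
  proof -
    have fF: "F face_of P" using F by (simp add: fcs_def)
    have pF: "polytope F" using face_of_polytope_polytope[OF P fF] .
    have vF: "vtx F \<subseteq> V" using vtx_face[OF fF] by (auto simp: V_def)
    have "F \<subseteq> {x. c \<bullet> x < s} \<longleftrightarrow> (\<forall>x\<in>vtx F. c \<bullet> x < s)" for c s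
      using hull_lt[OF poly_vtx(2)[OF pF], of c s] vtx_sub[of F] by blast
    then show ?thesis using equiv vF by (metis subsetD)
  qed
  have "{F\<in>fcs P. F \<subseteq> {x. a \<bullet> x < t}} = {F\<in>fcs P. F \<subseteq> {x. b \<bullet> x < t'}}"
    using sub_iff by blast
  moreover
  have "(\<Sum>F\<in>{F\<in>fcs P. F \<subseteq> {x. b \<bullet> x < t'}}. sg F) = 1"
  proof -
    define S where "S = {F\<in>fcs P. F \<subseteq> {x. b \<bullet> x < t'}}"
    have fS: "finite S" using fcs_finite[OF P] by (simp add: S_def)
    have img: "topv b ` S \<subseteq> V"
    proof
      fix v assume "v \<in> topv b ` S"
      then obtain F where F: "F \<in> S" "v = topv b F" by blast
      have fF: "F face_of P" "F \<noteq> {}" using F by (auto simp: S_def fcs_def)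
      have "v \<in> vtx F" using topv[OF face_of_polytope_polytope[OF P fF(1)] fF(2)] F by simp
      then show "v \<in> V" using vtx_face[OF fF(1)] by (simp add: V_def)
    qed
    have "(\<Sum>F\<in>S. sg F) = (\<Sum>v\<in>V. \<Sum>F\<in>{F. F \<in> S \<and> topv b F = v}. sg F)"
      using sum.group[OF fS fV img, of sg] by simp
    also have "\<dots> = (\<Sum>v\<in>V. if b \<bullet> v < t' \<and> (\<forall>y\<in>P. b \<bullet> v \<le> b \<bullet> y) then 1 else 0)"
    proof (rule sum.cong[OF refl])
      fix v assume v: "v \<in> V"
      have eqs: "{F. F \<in> S \<and> topv b F = v} = (if b \<bullet> v < t' then {F\<in>fcs P. topv b F = v} else {})"
      proof -
        have "F \<subseteq> {x. b \<bullet> x < t'} \<longleftrightarrow> b \<bullet> v < t'" if F: "F \<in> fcs P" "topv b F = v" for F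
          using topv_fcs[OF P inj[unfolded V_def] F(1) v[unfolded V_def]] F(2) by auto
        then show ?thesis by (auto simp: S_def)
      qed
      show "(\<Sum>F\<in>{F. F \<in> S \<and> topv b F = v}. sg F) = (if b \<bullet> v < t' \<and> (\<forall>y\<in>P. b \<bullet> v \<le> b \<bullet> y) then 1 else 0)"
        unfolding eqs using core_gen[OF P IH inj[unfolded V_def] v[unfolded V_def]] by simp
    qed
    also have "\<dots> = 1"
    proof -
      obtain v0 where v0: "v0 \<in> V" "\<forall>y\<in>P. b \<bullet> v0 \<le> b \<bullet> y"
        using min_at_vtx[OF P] ex by (auto simp: V_def)
      have "b \<bullet> v0 \<le> b \<bullet> x0" using v0 x0(1) vtx_sub by (auto simp: VL_def V_def)
      moreover have "b \<bullet> x0 < t'" using equiv[of x0] x0(1) by (simp add: VL_def)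
      ultimately have bt: "b \<bullet> v0 < t'" by simp
      have "(b \<bullet> v < t' \<and> (\<forall>y\<in>P. b \<bullet> v \<le> b \<bullet> y)) \<longleftrightarrow> v = v0" if "v \<in> V" for v
      proof
        assume h: "b \<bullet> v < t' \<and> (\<forall>y\<in>P. b \<bullet> v \<le> b \<bullet> y)"
        have "v0 \<in> P" "v \<in> P" using v0(1) that vtx_sub by (auto simp: V_def)
        then have "b \<bullet> v = b \<bullet> v0" using h v0(2) by (meson order.antisym)
        then show "v = v0" using inj that v0(1) by (auto simp: inj_on_def)
      qed (use bt v0 in auto)
      then have "(\<Sum>v\<in>V. if b \<bullet> v < t' \<and> (\<forall>y\<in>P. b \<bullet> v \<le> b \<bullet> y) then 1 else 0) = (\<Sum>v\<in>V. if v = v0 then 1 else (0::int))"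
        by (intro sum.cong) auto
      also have "\<dots> = 1" using fV v0(1) by simp
      finally show ?thesis .
    qed
    finally show ?thesis by (simp add: S_def)
  qed
  ultimately show "(\<Sum>F\<in>{F\<in>fcs P. F \<subseteq> {x. a \<bullet> x < t}}. sg F) = 1" by simp
qed

lemma K_all:
  fixes P :: "'a::euclidean_space set"
  shows "polytope P \<Longrightarrow> Kprop P"
proof (induction "nat (aff_dim P + 1)" arbitrary: P rule: less_induct)
  case less
  show ?case
  proof (rule K_step[OF less.prems])
    fix Q :: "'a set" assume Q: "polytope Q" "aff_dim Q < aff_dim P"
    have "nat (aff_dim Q + 1) < nat (aff_dim P + 1)" using Q(2) aff_dim_geq[of Q] by linarith
    then show "Kprop Q" using less.hyps Q(1) by blast
  qed
qed



lemma core_all: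
  fixes P :: "'a::euclidean_space set"
  assumes P: "polytope P" and inj: "inj_on (\<lambda>x. b \<bullet> x) (vtx P)" and v: "v \<in> vtx P"
  shows "(\<Sum>F\<in>{F\<in>fcs P. topv b F = v}. sg F) = (if \<forall>y\<in>P. b \<bullet> v \<le> b \<bullet> y then 1 else 0)"
  using core_gen[OF P _ inj v] K_all by blast

lemma M:
  fixes P :: "'a::euclidean_space set"
  assumes P: "polytope P" and ne: "P \<noteq> {}"
  shows "(\<Sum>F\<in>fcs P. real_of_int (sg F) * Sup ((\<lambda>x. a \<bullet> x) ` F)) = Inf ((\<lambda>x. a \<bullet> x) ` P)"
proof -
  define V where "V = vtx P"
  have fV: "finite V" and PV: "P = convex hull V" using poly_vtx[OF P] by (auto simp: V_def)
  obtain b where inj: "inj_on (\<lambda>x. b \<bullet> x) V" and ord: "\<forall>x\<in>V. \<forall>y\<in>V. a \<bullet> x < a \<bullet> y \<longrightarrow> b \<bullet> x < b \<bullet> y"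
    using pert[OF fV, of 1 a] by auto
  have supF: "Sup ((\<lambda>x. a \<bullet> x) ` F) = a \<bullet> topv b F" if F: "F \<in> fcs P" for F
  proof -
    have fF: "F face_of P" "F \<noteq> {}" using F by (auto simp: fcs_def)
    have pF: "polytope F" using face_of_polytope_polytope[OF P fF(1)] .
    have vF: "vtx F = V \<inter> F" using vtx_face[OF fF(1)] by (simp add: V_def)
    have t: "topv b F \<in> vtx F" "\<forall>y\<in>F. b \<bullet> y \<le> b \<bullet> topv b F" using topv[OF pF fF(2)] by auto
    have le: "a \<bullet> y \<le> a \<bullet> topv b F" if y: "y \<in> vtx F" for y
    proof (rule ccontr)
      assume "\<not> ?thesis"
      then have "b \<bullet> topv b F < b \<bullet> y" using ord t(1) y vF by auto
      moreover have "y \<in> F" using y vtx_sub by blast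
      ultimately show False using t(2) by fastforce
    qed
    have "\<And>y. y \<in> F \<Longrightarrow> a \<bullet> y \<le> a \<bullet> topv b F" using hull_le[OF poly_vtx(2)[OF pF]] le by blast
    moreover have "topv b F \<in> F" using t(1) vtx_sub by blast
    ultimately show ?thesis by (intro cSup_eq_maximum) auto
  qed
  have img: "topv b ` fcs P \<subseteq> V"
  proof
    fix v assume "v \<in> topv b ` fcs P"
    then obtain F where F: "F \<in> fcs P" "v = topv b F" by blast
    have fF: "F face_of P" "F \<noteq> {}" using F by (auto simp: fcs_def)
    have "v \<in> vtx F" using topv[OF face_of_polytope_polytope[OF P fF(1)] fF(2)] F by simp
    then show "v \<in> V" using vtx_face[OF fF(1)] by (simp add: V_def)
  qed
  have "(\<Sum>F\<in>fcs P. real_of_int (sg F) * Sup ((\<lambda>x. a \<bullet> x) ` F))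
      = (\<Sum>F\<in>fcs P. real_of_int (sg F) * (a \<bullet> topv b F))"
    using supF by (intro sum.cong) auto
  also have "\<dots> = (\<Sum>v\<in>V. \<Sum>F\<in>{F. F \<in> fcs P \<and> topv b F = v}. real_of_int (sg F) * (a \<bullet> topv b F))"
    by (rule sum.group[OF fcs_finite[OF P] fV img, symmetric])
  also have "\<dots> = (\<Sum>v\<in>V. real_of_int (if \<forall>y\<in>P. b \<bullet> v \<le> b \<bullet> y then 1 else 0) * (a \<bullet> v))"
  proof (rule sum.cong[OF refl])
    fix v assume v: "v \<in> V"
    have "(\<Sum>F\<in>{F. F \<in> fcs P \<and> topv b F = v}. real_of_int (sg F) * (a \<bullet> topv b F))
        = (\<Sum>F\<in>{F. F \<in> fcs P \<and> topv b F = v}. real_of_int (sg F) * (a \<bullet> v))"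
      by (intro sum.cong) auto
    also have "\<dots> = real_of_int (\<Sum>F\<in>{F\<in>fcs P. topv b F = v}. sg F) * (a \<bullet> v)"
      by (simp add: sum_distrib_right)
    also have "\<dots> = real_of_int (if \<forall>y\<in>P. b \<bullet> v \<le> b \<bullet> y then 1 else 0) * (a \<bullet> v)"
      using core_all[OF P inj[unfolded V_def] v[unfolded V_def]] by simp
    finally show "(\<Sum>F\<in>{F. F \<in> fcs P \<and> topv b F = v}. real_of_int (sg F) * (a \<bullet> topv b F))
        = real_of_int (if \<forall>y\<in>P. b \<bullet> v \<le> b \<bullet> y then 1 else 0) * (a \<bullet> v)" .
  qed
  also have "\<dots> = Inf ((\<lambda>x. a \<bullet> x) ` P)"
  proof -
    obtain v0 where v0: "v0 \<in> V" "\<forall>y\<in>P. b \<bullet> v0 \<le> b \<bullet> y"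
      using min_at_vtx[OF P ne] by (auto simp: V_def)
    have uniq: "(\<forall>y\<in>P. b \<bullet> v \<le> b \<bullet> y) \<longleftrightarrow> v = v0" if "v \<in> V" for v
    proof
      assume h: "\<forall>y\<in>P. b \<bullet> v \<le> b \<bullet> y"
      have "v0 \<in> P" "v \<in> P" using v0(1) that vtx_sub by (auto simp: V_def)
      then have "b \<bullet> v = b \<bullet> v0" using h v0(2) by (meson order.antisym)
      then show "v = v0" using inj that v0(1) by (auto simp: inj_on_def)
    qed (use v0 in auto)
    have "(\<Sum>v\<in>V. real_of_int (if \<forall>y\<in>P. b \<bullet> v \<le> b \<bullet> y then 1 else 0) * (a \<bullet> v))
        = (\<Sum>v\<in>V. if v = v0 then a \<bullet> v else 0)"
      using uniq by (intro sum.cong) auto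
    also have "\<dots> = a \<bullet> v0" using fV v0(1) by simp
    also have "\<dots> = Inf ((\<lambda>x. a \<bullet> x) ` P)"
    proof -
      have lev: "a \<bullet> v0 \<le> a \<bullet> y" if y: "y \<in> V" for y
      proof (rule ccontr)
        assume "\<not> ?thesis"
        then have "b \<bullet> y < b \<bullet> v0" using ord y v0(1) by auto
        moreover have "y \<in> P" using y vtx_sub by (auto simp: V_def)
        ultimately show False using v0(2) by fastforce
      qed
      have "\<And>y. y \<in> P \<Longrightarrow> (-a) \<bullet> y \<le> - (a \<bullet> v0)" using hull_le[OF PV, of "-a" "- (a \<bullet> v0)"] lev by auto
      moreover have "v0 \<in> P" using v0(1) vtx_sub by (auto simp: V_def)
      ultimately show ?thesis by (intro cInf_eq_minimum[symmetric]) force+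
    qed
    finally show ?thesis .
  qed
  finally show ?thesis .
qed



lemma nep_iff: "ne_polytope P \<longleftrightarrow> polytope P \<and> P \<noteq> {}"
  unfolding ne_polytope_def polytope_def by auto

lemma lin_inner:
  fixes \<phi> :: "'a::euclidean_space \<Rightarrow> real"
  assumes "linear \<phi>"
  shows "\<exists>a. \<forall>x. \<phi> x = a \<bullet> x"
proof -
  define a where "a = (\<Sum>i\<in>Basis. \<phi> i *\<^sub>R i)"
  have "\<phi> x = a \<bullet> x" for x
  proof -
    have "\<phi> x = \<phi> x \<bullet> 1" by simp
    also have "\<dots> = (\<Sum>i\<in>Basis. (x \<bullet> i) * (\<phi> i \<bullet> 1))" by (rule Linear_Algebra.linear_componentwise[OF assms])
    also have "\<dots> = a \<bullet> x" by (simp add: a_def inner_sum_left mult.commute inner_commute[of x])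
    finally show ?thesis .
  qed
  then show ?thesis by blast
qed

lemma faces_eq:
  fixes P :: "'a::euclidean_space set"
  assumes P: "polytope P" and ne: "P \<noteq> {}"
  shows "faces P = fcs P"
proof
  show "faces P \<subseteq> fcs P"
  proof
    fix F assume "F \<in> faces P"
    then obtain \<phi> where \<phi>: "linear \<phi>" "F = face_of_fun \<phi> P" by (auto simp: faces_def)
    obtain a where a: "\<And>x. \<phi> x = a \<bullet> x" using lin_inner[OF \<phi>(1)] by blast
    obtain v where v: "v \<in> vtx P" "\<forall>y\<in>P. a \<bullet> y \<le> a \<bullet> v" using max_at_vtx[OF P ne] by blast
    have vP: "v \<in> P" using v(1) vtx_sub by blast
    have "F = P \<inter> {x. a \<bullet> x = a \<bullet> v}"
      using v vP by (auto simp: \<phi>(2) face_of_fun_def a intro: order.antisym)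
    moreover have "P \<inter> {x. a \<bullet> x = a \<bullet> v} face_of P"
      using v(2) by (intro face_of_Int_supporting_hyperplane_le polytope_imp_convex[OF P]) auto
    ultimately show "F \<in> fcs P" using vP by (auto simp: fcs_def)
  qed
next
  show "fcs P \<subseteq> faces P"
  proof
    fix F assume F: "F \<in> fcs P"
    then have "F exposed_face_of P"
      using exposed_face_of_polyhedron[OF polytope_imp_polyhedron[OF P]] by (simp add: fcs_def)
    then obtain a e where ae: "P \<subseteq> {x. a \<bullet> x \<le> e}" "F = P \<inter> {x. a \<bullet> x = e}"
      unfolding exposed_face_of_def by blast
    obtain p where p: "p \<in> F" using F by (auto simp: fcs_def)
    have "F = face_of_fun (\<lambda>x. a \<bullet> x) P"
      using ae p by (auto simp: face_of_fun_def intro: order.antisym)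
    moreover have "linear (\<lambda>x. a \<bullet> x)" using bounded_linear_inner_right[of a] bounded_linear.linear by blast
    ultimately show "F \<in> faces P" by (auto simp: faces_def)
  qed
qed

lemma nep_plus: "ne_polytope A \<Longrightarrow> ne_polytope B \<Longrightarrow> ne_polytope (A + B)"
  unfolding ne_polytope_def
proof (elim exE conjE)
  fix S T assume "finite S" "S \<noteq> {}" "A = convex hull S" "finite T" "T \<noteq> {}" "B = convex hull T"
  then show "\<exists>U. finite U \<and> U \<noteq> {} \<and> A + B = convex hull U"
  proof (intro exI[of _ "S + T"] conjI)
    show "finite (S + T)" using \<open>finite S\<close> \<open>finite T\<close> by (rule finite_set_plus)
    show "S + T \<noteq> {}" using \<open>S \<noteq> {}\<close> \<open>T \<noteq> {}\<close> by (auto simp: set_plus_def)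
    show "A + B = convex hull (S + T)" using \<open>A = convex hull S\<close> \<open>B = convex hull T\<close> by (simp add: convex_hull_set_plus)
  qed
qed

lemma nep_zero: "ne_polytope (0::'a::euclidean_space set)"
  unfolding ne_polytope_def by (intro exI[of _ "{0}"]) simp

lemma nep_sum:
  fixes f :: "'b \<Rightarrow> 'a::euclidean_space set"
  shows "finite S \<Longrightarrow> (\<And>F. F \<in> S \<Longrightarrow> ne_polytope (f F)) \<Longrightarrow> ne_polytope (\<Sum>F\<in>S. f F)"
  by (induction S rule: finite_induct) (auto simp: nep_zero nep_plus simp del: set_zero)

definition hs :: "'a::euclidean_space set \<Rightarrow> 'a \<Rightarrow> real" where
  "hs A a = Sup ((\<lambda>x. a \<bullet> x) ` A)"

lemma hs_max:
  assumes "ne_polytope A"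
  shows "\<exists>v\<in>A. hs A a = a \<bullet> v \<and> (\<forall>y\<in>A. a \<bullet> y \<le> a \<bullet> v)"
proof -
  obtain v where v: "v \<in> vtx A" "\<forall>y\<in>A. a \<bullet> y \<le> a \<bullet> v"
    using max_at_vtx assms nep_iff by blast
  have vA: "v \<in> A" using v(1) vtx_sub by blast
  have "hs A a = a \<bullet> v" unfolding hs_def using v vA by (intro cSup_eq_maximum) auto
  then show ?thesis using v vA by blast
qed

lemma hs_plus:
  assumes A: "ne_polytope A" and B: "ne_polytope B"
  shows "hs (A + B) a = hs A a + hs B a"
proof -
  obtain u where u: "u \<in> A" "hs A a = a \<bullet> u" "\<forall>y\<in>A. a \<bullet> y \<le> a \<bullet> u" using hs_max[OF A] by blast
  obtain v where v: "v \<in> B" "hs B a = a \<bullet> v" "\<forall>y\<in>B. a \<bullet> y \<le> a \<bullet> v" using hs_max[OF B] by blast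
  have "hs (A + B) a = a \<bullet> (u + v)" unfolding hs_def
  proof (rule cSup_eq_maximum)
    show "a \<bullet> (u + v) \<in> (\<lambda>x. a \<bullet> x) ` (A + B)" using u v by (auto simp: set_plus_def)
    fix z assume "z \<in> (\<lambda>x. a \<bullet> x) ` (A + B)"
    then obtain p q where "p \<in> A" "q \<in> B" "z = a \<bullet> (p + q)" by (auto simp: set_plus_def)
    then show "z \<le> a \<bullet> (u + v)" using u(3) v(3) by (simp add: inner_add_right add_mono)
  qed
  then show ?thesis using u v by (simp add: inner_add_right)
qed

lemma hs_zero: "hs (0::'a::euclidean_space set) a = 0"
  by (simp add: hs_def)

lemma hs_sum:
  fixes f :: "'b \<Rightarrow> 'a::euclidean_space set"
  shows "finite S \<Longrightarrow> (\<And>F. F \<in> S \<Longrightarrow> ne_polytope (f F)) \<Longrightarrow> hs (\<Sum>F\<in>S. f F) a = (\<Sum>F\<in>S. hs (f F) a)"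
proof (induction S rule: finite_induct)
  case empty then show ?case by (simp only: sum.empty hs_zero)
next
  case (insert x S)
  have "hs (f x + (\<Sum>F\<in>S. f F)) a = hs (f x) a + hs (\<Sum>F\<in>S. f F) a"
    using insert by (intro hs_plus nep_sum) auto
  then show ?case using insert by simp
qed

lemma supp_eq:
  fixes A B :: "'a::euclidean_space set"
  assumes A: "ne_polytope A" and B: "ne_polytope B" and h: "\<And>a. hs A a = hs B a"
  shows "A = B"
proof -
  have sub: "X \<subseteq> Y" if X: "ne_polytope X" and Y: "ne_polytope Y" and h: "\<And>a. hs X a = hs Y a" for X Y :: "'a set"
  proof
    fix x assume x: "x \<in> X"
    show "x \<in> Y"
    proof (rule ccontr)
      assume "x \<notin> Y"
      have pY: "polytope Y" using Y nep_iff by blast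
      obtain a c where ac: "a \<bullet> x < c" "\<forall>y\<in>Y. c < a \<bullet> y"
        using separating_hyperplane_closed_point[OF polytope_imp_convex[OF pY] polytope_imp_closed[OF pY] \<open>x \<notin> Y\<close>]
        by blast
      obtain v where v: "v \<in> Y" "hs Y (-a) = (-a) \<bullet> v" using hs_max[OF Y] by blast
      obtain u where u: "hs X (-a) = (-a) \<bullet> u" "\<forall>y\<in>X. (-a) \<bullet> y \<le> (-a) \<bullet> u" using hs_max[OF X] by blast
      have "(-a) \<bullet> x \<le> hs X (-a)" using u x by simp
      also have "\<dots> = (-a) \<bullet> v" using h v by simp
      finally show False using ac v(1) by auto
    qed
  qed
  show ?thesis using sub[OF A B h] sub[OF B A] h by (metis subset_antisym)
qed



lemma sg_cases: "sg F = 1 \<or> sg F = -1"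
  by (simp add: sg_def minus_one_power_iff)

lemma zm: "zmul ((-1) ^ nat (aff_dim F)) (pcls F) = (if sg F = 1 then (F, 0) else (0, F))"
proof (cases "sg F = 1")
  case True
  then have "(-1::int) ^ nat (aff_dim F) = 1" by (simp add: sg_def)
  then show ?thesis using True by (simp add: zmul_def pcls_def)
next
  case False
  then have "(-1::int) ^ nat (aff_dim F) = -1" using sg_cases[of F] by (simp add: sg_def)
  then show ?thesis using False by (simp add: zmul_def pcls_def gneg_def)
qed

lemma hs_refl:
  fixes P :: "'a::euclidean_space set"
  assumes P: "polytope P" "P \<noteq> {}"
  shows "hs (refl_poly P) a = - Inf ((\<lambda>x. a \<bullet> x) ` P)"
proof -
  obtain v where v: "v \<in> vtx P" "\<forall>y\<in>P. a \<bullet> v \<le> a \<bullet> y" using min_at_vtx[OF P] by blast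
  have vP: "v \<in> P" using v(1) vtx_sub by blast
  have "Inf ((\<lambda>x. a \<bullet> x) ` P) = a \<bullet> v" using v vP by (intro cInf_eq_minimum) auto
  moreover have "hs (refl_poly P) a = - (a \<bullet> v)" unfolding hs_def refl_poly_def
  proof (rule cSup_eq_maximum)
    show "- (a \<bullet> v) \<in> (\<lambda>x. a \<bullet> x) ` uminus ` P"
      by (rule image_eqI[of _ _ "-v"]) (auto simp: vP)
  qed (use v in auto)
  ultimately show ?thesis by simp
qed

lemma nep_refl:
  fixes P :: "'a::euclidean_space set"
  assumes "ne_polytope P" shows "ne_polytope (refl_poly P)"
proof -
  obtain S where S: "finite S" "S \<noteq> {}" "P = convex hull S" using assms ne_polytope_def by blast
  have lin: "linear (uminus :: 'a \<Rightarrow> 'a)" by (simp add: linear_iff)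
  have "refl_poly P = convex hull (uminus ` S)"
    unfolding refl_poly_def S(3) by (rule convex_hull_linear_image[OF lin])
  then show ?thesis using S unfolding ne_polytope_def by blast
qed

theorem theorem5p2:
  fixes P :: "'a::euclidean_space set"
  assumes "ne_polytope P"
  shows "groth_eq (pcls (refl_poly P))
           (gneg (\<Sum>F\<in>faces P. zmul ((-1) ^ nat (aff_dim F)) (pcls F)))"
proof -
  have P: "polytope P" and ne: "P \<noteq> {}" using assms nep_iff by auto
  define S where "S = fcs P"
  have fS: "finite S" using fcs_finite[OF P] by (simp add: S_def)
  have nepF: "ne_polytope F" if "F \<in> S" for F
    using that fcs_polytope[OF P] by (auto simp: S_def fcs_def nep_iff)
  define E where "E = (\<Sum>F\<in>S. if sg F = 1 then F else 0)"
  define Od where "Od = (\<Sum>F\<in>S. if sg F = 1 then 0 else F)"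
  have sumeq: "(\<Sum>F\<in>faces P. zmul ((-1) ^ nat (aff_dim F)) (pcls F)) = (E, Od)"
  proof -
    have "(\<Sum>F\<in>faces P. zmul ((-1) ^ nat (aff_dim F)) (pcls F))
        = (\<Sum>F\<in>S. (if sg F = 1 then (F, 0) else (0, F)))"
      by (simp only: faces_eq[OF P ne] S_def zm)
    also have "\<dots> = (E, Od)"
      by (rule prod_eqI) (simp_all only: fst_sum snd_sum E_def Od_def if_distrib fst_conv snd_conv)
    finally show ?thesis .
  qed
  have nepE: "ne_polytope E" unfolding E_def using fS nepF nep_zero by (intro nep_sum) auto
  have nepO: "ne_polytope Od" unfolding Od_def using fS nepF nep_zero by (intro nep_sum) auto
  have nepR: "ne_polytope (refl_poly P)" using nep_refl[OF assms] .
  have eq: "refl_poly P + E = Od"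
  proof (rule supp_eq[OF nep_plus[OF nepR nepE] nepO])
    fix a
    have hE: "hs E a = (\<Sum>F\<in>S. if sg F = 1 then hs F a else 0)"
      unfolding E_def using fS nepF nep_zero
      by (subst hs_sum) (auto intro!: sum.cong simp: hs_zero simp del: set_zero)
    have hO: "hs Od a = (\<Sum>F\<in>S. if sg F = 1 then 0 else hs F a)"
      unfolding Od_def using fS nepF nep_zero
      by (subst hs_sum) (auto intro!: sum.cong simp: hs_zero simp del: set_zero)
    have "(\<Sum>F\<in>S. real_of_int (sg F) * hs F a) = Inf ((\<lambda>x. a \<bullet> x) ` P)"
      using M[OF P ne, of a] by (simp add: S_def hs_def)
    moreover have "(\<Sum>F\<in>S. real_of_int (sg F) * hs F a)
        = (\<Sum>F\<in>S. if sg F = 1 then hs F a else 0) - (\<Sum>F\<in>S. if sg F = 1 then 0 else hs F a)"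
    proof -
      have "real_of_int (sg F) * hs F a = (if sg F = 1 then hs F a else 0) - (if sg F = 1 then 0 else hs F a)" for F
        using sg_cases[of F] by auto
      then show ?thesis by (simp add: sum_subtractf)
    qed
    ultimately show "hs (refl_poly P + E) a = hs Od a"
      using hs_plus[OF nepR nepE] hs_refl[OF P ne] hE hO by simp
  qed
  show ?thesis
    unfolding groth_eq_def sumeq
    using nepR nepE nepO nep_zero eq
    by (auto simp: pcls_def gneg_def simp del: set_zero intro!: exI[of _ 0])
qed


end
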